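(* For every $n\ge1$ there is a bijection $\sigma\mapsto\sigma'$ from $\mathcal{W}^*_{2n+1}$ onto $\mathcal{C}_{2n+3}$ such that $\mathrm{drop}(\sigma')=\mathrm{des}(\sigma)+1$.
   Context: For $\sigma\in\mathfrak{S}_m$ (permutations of $[m]$), a descent is an index $i$ with $\sigma_i>\sigma_{i+1}$, with descent pair $(\sigma_i,\sigma_{i+1})$; $\mathrm{des}(\sigma)$ is the number of descents. $\mathcal{W}^*_{2n+1}$ is the set of permutations of $[2n+1]$ whose every descent pair consists of two odd entries and whose last entry is odd. A drop of $\sigma$ is a pair $(i,\sigma(i))$ with $i>\sigma(i)$; $\mathrm{drop}(\sigma)$ is the number of drops; a drop is odd-odd if both $i$ and $\sigma(i)$ are odd. $\mathcal{C}_m$ is the set of cyclic permutations of $[m]$ (consisting of a single $m$-cycle) all of whose drops are odd-odd. *)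

theory Defs
  imports "HOL-Combinatorics.Permutations"
begin

definition perms :: "nat \<Rightarrow> (nat \<Rightarrow> nat) set" where
  "perms m = {\<sigma>. \<sigma> permutes {1..m}}"

definition descents :: "nat \<Rightarrow> (nat \<Rightarrow> nat) \<Rightarrow> nat set" where
  "descents m \<sigma> = {i. 1 \<le> i \<and> i < m \<and> \<sigma> i > \<sigma> (Suc i)}"

definition des :: "nat \<Rightarrow> (nat \<Rightarrow> nat) \<Rightarrow> nat" where
  "des m \<sigma> = card (descents m \<sigma>)"

definition Wstar :: "nat \<Rightarrow> (nat \<Rightarrow> nat) set" where
  "Wstar n = {\<sigma> \<in> perms (2*n+1).
     (\<forall>i \<in> descents (2*n+1) \<sigma>. odd (\<sigma> i) \<and> odd (\<sigma> (Suc i))) \<and>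
     odd (\<sigma> (2*n+1))}"

definition drops :: "nat \<Rightarrow> (nat \<Rightarrow> nat) \<Rightarrow> nat set" where
  "drops m \<sigma> = {i \<in> {1..m}. i > \<sigma> i}"

definition drop_num :: "nat \<Rightarrow> (nat \<Rightarrow> nat) \<Rightarrow> nat" where
  "drop_num m \<sigma> = card (drops m \<sigma>)"

definition is_mcycle :: "nat \<Rightarrow> (nat \<Rightarrow> nat) \<Rightarrow> bool" where
  "is_mcycle m \<sigma> \<longleftrightarrow> (\<forall>x \<in> {1..m}. \<forall>y \<in> {1..m}. \<exists>k. (\<sigma> ^^ k) x = y)"

definition Ccyc :: "nat \<Rightarrow> (nat \<Rightarrow> nat) set" where
  "Ccyc m = {\<sigma> \<in> perms m. is_mcycle m \<sigma> \<and>
     (\<forall>i \<in> drops m \<sigma>. odd i \<and> odd (\<sigma> i))}"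

end

theory Submission imports Defs "HOL-Combinatorics.Cycles" begin


lemma cyc_pow_nth:
  assumes "distinct L" "i < length L"
  shows "(cycle_of_list L ^^ j) (L!i) = L!((i+j) mod length L)"
proof -
  have "map (cycle_of_list L ^^ j) L = rotate j L" by (rule cyclic_rotation[OF assms(1)])
  hence "(cycle_of_list L ^^ j) (L!i) = rotate j L ! i" using assms(2)
    by (metis nth_map)
  also have "\<dots> = L!((i+j) mod length L)" using assms(2) by (simp add: nth_rotate add.commute)
  finally show ?thesis .
qed

lemma cyc_nth:
  assumes "distinct L" "i < length L"
  shows "cycle_of_list L (L!i) = L!(Suc i mod length L)"
  using cyc_pow_nth[OF assms, of 1] by simp

lemma perm_of_inj:
  assumes "finite S" "\<And>x. x\<in>S \<Longrightarrow> f x \<in> S" "inj_on f S" "\<And>x. x\<notin>S \<Longrightarrow> f x = x"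
  shows "f permutes S"
proof (rule bij_imp_permutes)
  have "f ` S = S" using endo_inj_surj[OF assms(1) _ assms(3)] assms(2) by blast
  thus "bij_betw f S S" using assms(3) by (simp add: bij_betw_def)
qed (use assms(4) in auto)

definition Lw :: "nat \<Rightarrow> (nat \<Rightarrow> nat) \<Rightarrow> nat list" where
  "Lw N \<tau> = (N+2) # map \<tau> [1..<N+1] @ [N+1]"

lemma Lw_len: "length (Lw N \<tau>) = N+2" by (simp add: Lw_def)

lemma Lw_nth: "k \<le> N+1 \<Longrightarrow> Lw N \<tau> ! k = (if k = 0 then N+2 else if k \<le> N then \<tau> k else N+1)"
  by (cases k) (auto simp: Lw_def nth_append nth_map_upt simp del: upt_Suc)

lemma Lw_distinct_set:
  assumes "\<tau> permutes {1..N}"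
  shows "distinct (Lw N \<tau>)" "set (Lw N \<tau>) = {1..N+2}"
proof -
  have inj: "inj_on \<tau> {1..N}" using assms permutes_inj_on by blast
  have img: "\<tau> ` {1..N} = {1..N}" using assms permutes_image by blast
  have s: "set (map \<tau> [1..<N+1]) = {1..N}" using img by (simp add: atLeastLessThanSuc_atLeastAtMost del: upt_Suc)
  have d: "distinct (map \<tau> [1..<N+1])" using inj
    by (simp add: distinct_map atLeastLessThanSuc_atLeastAtMost del: upt_Suc)
  show "distinct (Lw N \<tau>)" using s d by (auto simp: Lw_def)
  show "set (Lw N \<tau>) = {1..N+2}" using s by (auto simp: Lw_def)
qed

definition Aset :: "nat \<Rightarrow> (nat \<Rightarrow> nat) set" where
  "Aset N = {\<tau> \<in> perms N. odd (\<tau> 1) \<and> (\<forall>i\<in>descents N \<tau>. odd (\<tau> i) \<and> odd (\<tau> (Suc i)))}"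

lemma step_Lw:
  assumes p: "\<tau> permutes {1..N}" and k: "k \<le> N+1"
  shows "cycle_of_list (Lw N \<tau>) (Lw N \<tau> ! k) = (if k = N+1 then N+2 else Lw N \<tau> ! (Suc k))"
proof -
  note ds = Lw_distinct_set[OF p]
  have "cycle_of_list (Lw N \<tau>) (Lw N \<tau> ! k) = Lw N \<tau> ! (Suc k mod (N+2))"
    using cyc_nth[OF ds(1), of k] k by (simp add: Lw_len)
  then show ?thesis using k by (cases "k = N+1") (auto simp: Lw_nth)
qed

lemma drops_Lw:
  assumes p: "\<tau> permutes {1..N}" and N: "N \<ge> 1"
  shows "drops (N+2) (cycle_of_list (Lw N \<tau>)) = insert (N+2) (\<tau> ` descents N \<tau>)"
proof -
  let ?L = "Lw N \<tau>" let ?c = "cycle_of_list ?L"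
  note ds = Lw_distinct_set[OF p]
  have tin: "\<tau> k \<in> {1..N}" if "k\<in>{1..N}" for k using permutes_in_image[OF p, of k] that by blast
  show ?thesis
  proof (intro set_eqI iffI)
    fix x assume "x \<in> drops (N+2) ?c"
    then have x: "x \<in> {1..N+2}" "?c x < x" by (auto simp: drops_def)
    from x(1) ds(2) obtain k where k: "k < N+2" "x = ?L!k" by (metis in_set_conv_nth Lw_len)
    consider "k=0" | "1\<le>k" "k<N" | "k = N" | "k = N+1" using k by linarith
    then show "x \<in> insert (N+2) (\<tau> ` descents N \<tau>)"
    proof cases
      case 1 then show ?thesis using k by (simp add: Lw_nth)
    next
      case 2
      then have "x = \<tau> k" "?c x = \<tau> (Suc k)" using step_Lw[OF p, of k] k by (auto simp: Lw_nth)
      then show ?thesis using x 2 by (auto simp: descents_def)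
    next
      case 3
      then have "x = \<tau> N" "?c x = N+1" using step_Lw[OF p, of k] k N by (auto simp: Lw_nth)
      then show ?thesis using x tin[of N] N by auto
    next
      case 4
      then have "x = N+1" "?c x = N+2" using step_Lw[OF p, of k] k N by (auto simp: Lw_nth)
      then show ?thesis using x by auto
    qed
  next
    fix x assume "x \<in> insert (N+2) (\<tau> ` descents N \<tau>)"
    then consider "x = N+2" | k where "k \<in> descents N \<tau>" "x = \<tau> k" by blast
    then show "x \<in> drops (N+2) ?c"
    proof cases
      case 1
      have "?c x = \<tau> 1" using step_Lw[OF p, of 0] 1 N by (simp add: Lw_nth)
      then show ?thesis using 1 tin[of 1] N by (auto simp: drops_def)
    next
      case 2
      then have k: "1 \<le> k" "k < N" "\<tau> k > \<tau> (Suc k)" by (auto simp: descents_def)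
      have "?c (?L!k) = ?L ! Suc k" using step_Lw[OF p, of k] k by auto
      then have "?c x = \<tau> (Suc k)" using k 2 by (simp add: Lw_nth)
      then show ?thesis using 2 k tin[of k] by (auto simp: drops_def)
    qed
  qed
qed

lemma dropnum_Lw:
  assumes p: "\<tau> permutes {1..N}" and N: "N \<ge> 1"
  shows "drop_num (N+2) (cycle_of_list (Lw N \<tau>)) = des N \<tau> + 1"
proof -
  have D: "descents N \<tau> \<subseteq> {1..N}" by (auto simp: descents_def)
  have inj: "inj_on \<tau> (descents N \<tau>)" using permutes_inj_on[OF p] D inj_on_subset by blast
  have fin: "finite (descents N \<tau>)" using D finite_subset by blast
  have "\<tau> ` descents N \<tau> \<subseteq> {1..N}" using D p permutes_in_image by fastforce
  hence nin: "N+2 \<notin> \<tau> ` descents N \<tau>" by auto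
  show ?thesis unfolding drop_num_def drops_Lw[OF assms] des_def
    using nin fin inj by (simp add: card_image)
qed

lemma Lw_in_C:
  assumes A: "\<tau> \<in> Aset N" and N: "N \<ge> 1" and oN: "odd N"
  shows "cycle_of_list (Lw N \<tau>) \<in> Ccyc (N+2)"
proof -
  let ?L = "Lw N \<tau>" let ?c = "cycle_of_list ?L"
  have p: "\<tau> permutes {1..N}" using A by (simp add: Aset_def perms_def)
  note ds = Lw_distinct_set[OF p]
  have "?c permutes {1..N+2}" using cycle_permutes[of ?L] ds by simp
  hence P: "?c \<in> perms (N+2)" by (simp add: perms_def)
  have M: "is_mcycle (N+2) ?c" unfolding is_mcycle_def
  proof (intro ballI)
    fix x y assume "x \<in> {1..N+2}" "y \<in> {1..N+2}"
    then obtain i j where ij: "i < N+2" "j < N+2" "x = ?L!i" "y = ?L!j" using ds(2)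
      by (metis in_set_conv_nth Lw_len)
    have "(?c ^^ (j + (N+2) - i)) x = ?L!((i + (j + (N+2) - i)) mod (N+2))"
      using cyc_pow_nth[OF ds(1), of i] ij by (simp add: Lw_len)
    also have "i + (j + (N+2) - i) = j + (N+2)" using ij by simp
    also have "(j + (N+2)) mod (N+2) = j" using ij by (simp only: mod_add_self2 mod_less)
    finally show "\<exists>k. (?c ^^ k) x = y" using ij by blast
  qed
  have O: "\<forall>i \<in> drops (N+2) ?c. odd i \<and> odd (?c i)"
  proof
    fix x assume "x \<in> drops (N+2) ?c"
    then consider "x = N+2" | k where "k \<in> descents N \<tau>" "x = \<tau> k"
      using drops_Lw[OF p N] by blast
    then show "odd x \<and> odd (?c x)"
    proof cases
      case 1
      have "?c x = \<tau> 1" using step_Lw[OF p, of 0] 1 N by (simp add: Lw_nth)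
      then show ?thesis using 1 A oN by (simp add: Aset_def)
    next
      case 2
      then have k: "1 \<le> k" "k < N" by (auto simp: descents_def)
      have "?c (?L!k) = ?L ! Suc k" using step_Lw[OF p, of k] k by auto
      then have "?c x = \<tau> (Suc k)" using k 2 by (simp add: Lw_nth)
      then show ?thesis using 2 A by (simp add: Aset_def)
    qed
  qed
  show ?thesis using P M O by (simp add: Ccyc_def)
qed

definition tc :: "nat \<Rightarrow> (nat \<Rightarrow> nat) \<Rightarrow> nat \<Rightarrow> nat" where
  "tc N c = (\<lambda>k. if k \<in> {1..N} then (c ^^ k) (N+2) else k)"

lemma C_props:
  assumes C: "c \<in> Ccyc (N+2)" and N: "N \<ge> 1" and oN: "odd N"
  shows "Lw N (tc N c) = support c (N+2)" "cycle_of_list (Lw N (tc N c)) = c"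
        "tc N c \<in> Aset N"
proof -
  let ?m = "N+2"
  define S where "S = support c ?m"
  have p: "c permutes {1..?m}" using C by (simp add: Ccyc_def perms_def)
  have mc: "is_mcycle ?m c" using C by (simp add: Ccyc_def)
  have oo: "\<And>i. i \<in> drops ?m c \<Longrightarrow> odd i \<and> odd (c i)" using C by (simp add: Ccyc_def)
  have perm: "permutation c" using p permutation_permutes by blast
  have rng: "range (\<lambda>i. (c^^i) ?m) = {1..?m}"
  proof
    show "range (\<lambda>i. (c^^i) ?m) \<subseteq> {1..?m}"
      using permutes_funpow[OF p] permutes_in_image by fastforce
    show "{1..?m} \<subseteq> range (\<lambda>i. (c^^i) ?m)"
    proof
      fix y assume "y \<in> {1..?m}"
      then obtain k where "(c^^k) ?m = y" using mc unfolding is_mcycle_def by force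
      then show "y \<in> range (\<lambda>i. (c^^i) ?m)" by blast
    qed
  qed
  have setS: "set S = {1..?m}" unfolding S_def using support_set[OF perm] rng by simp
  have dS: "distinct S" unfolding S_def using cycle_of_permutation[OF perm] .
  have lenS: "length S = ?m" using distinct_card[OF dS] setS by simp
  hence lp: "least_power c ?m = ?m" by (simp add: S_def)
  have Snth: "S ! k = (c^^k) ?m" if "k < ?m" for k using that lp unfolding S_def by (simp del: upt_Suc)
  have cS: "cycle_of_list S = c"
  proof
    fix x show "cycle_of_list S x = c x"
    proof (cases "x \<in> set S")
      case True then show ?thesis using cycle_restrict[OF perm True[unfolded S_def]] by (simp add: S_def)
    next
      case False then show ?thesis using id_outside_supp[OF False] p setS
        by (simp add: permutes_not_in)
    qed
  qed
  have stepS: "c (S ! k) = S ! (Suc k mod ?m)" if "k < ?m" for k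
    using cyc_nth[OF dS, of k] that lenS cS by simp
  have S0: "S ! 0 = ?m" using Snth[of 0] by simp
  have Sin: "S ! k \<in> {1..?m}" if "k < ?m" for k using that setS lenS nth_mem by metis
  have Sinj: "S ! i = S ! j \<longleftrightarrow> i = j" if "i < ?m" "j < ?m" for i j
    using nth_eq_iff_index_eq[OF dS] that lenS by simp
  obtain k where k: "k < ?m" "S ! k = N+1" using setS lenS by (metis in_set_conv_nth atLeastAtMost_iff le_add1 add_2_eq_Suc' le_SucI Suc_le_mono le_add2 One_nat_def add_Suc_right plus_1_eq_Suc)
  have SN1: "S ! (N+1) = N+1"
  proof -
    have ck: "c (N+1) = S ! (Suc k mod ?m)" using stepS[OF k(1)] k(2) by simp
    have "c (N+1) \<in> {1..?m}" using Sin ck by simp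
    moreover have "c (N+1) \<noteq> N+1"
    proof
      assume "c (N+1) = N+1"
      hence "S ! (Suc k mod ?m) = S ! k" using ck k by simp
      hence "Suc k mod ?m = k" using Sinj k(1) by simp
      thus False using k(1) by (cases "Suc k = ?m") auto
    qed
    moreover have "\<not> c (N+1) < N+1"
    proof
      assume "c (N+1) < N+1"
      hence "N+1 \<in> drops ?m c" by (simp add: drops_def)
      hence "odd (N+1)" using oo by blast
      thus False using oN by simp
    qed
    ultimately have "c (N+1) = ?m" by auto
    hence "S ! (Suc k mod ?m) = S ! 0" using ck S0 by simp
    hence "Suc k mod ?m = 0" using Sinj k(1) by simp
    hence "Suc k = ?m" using k(1) by (cases "Suc k = ?m") auto
    thus ?thesis using k by simp
  qed
  show L: "Lw N (tc N c) = support c (N+2)" unfolding S_def[symmetric]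
  proof (rule nth_equalityI)
    show "length (Lw N (tc N c)) = length S" using lenS Lw_len by simp
    fix i assume "i < length (Lw N (tc N c))"
    hence i: "i \<le> N+1" by (simp add: Lw_len)
    show "Lw N (tc N c) ! i = S ! i"
      using i S0 SN1 Snth[of i] by (cases "i = N+1") (auto simp: Lw_nth tc_def)
  qed
  show "cycle_of_list (Lw N (tc N c)) = c" using L cS by (simp add: S_def)
  have tcS: "tc N c i = S ! i" if "i \<in> {1..N}" for i using that Snth[of i] by (simp add: tc_def)
  have tin: "tc N c i \<in> {1..N}" if i: "i \<in> {1..N}" for i
  proof -
    have "S ! i \<in> {1..?m}" using Sin i by simp
    moreover have "S ! i \<noteq> S ! 0" using Sinj[of i 0] i by simp
    moreover have "S ! i \<noteq> S ! (N+1)" using Sinj[of i "N+1"] i by simp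
    ultimately show ?thesis using tcS[OF i] S0 SN1 by auto
  qed
  have tp: "tc N c permutes {1..N}"
  proof (rule perm_of_inj)
    show "inj_on (tc N c) {1..N}"
      by (rule inj_onI) (use tcS Sinj in force)
  qed (use tin in \<open>auto simp: tc_def\<close>)
  have t1: "odd (tc N c 1)"
  proof -
    have "c ?m = S ! 1" using stepS[of 0] S0 N by simp
    moreover have "S ! 1 = tc N c 1" using tcS[of 1] N by simp
    ultimately have "c ?m = tc N c 1" by simp
    moreover have "tc N c 1 \<le> N" using tin[of 1] N by simp
    ultimately have "?m \<in> drops ?m c" by (simp add: drops_def)
    hence "odd (c ?m)" using oo by blast
    thus ?thesis using \<open>c ?m = tc N c 1\<close> by simp
  qed
  have td: "odd (tc N c i) \<and> odd (tc N c (Suc i))" if "i \<in> descents N (tc N c)" for i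
  proof -
    have i: "1 \<le> i" "i < N" "tc N c i > tc N c (Suc i)" using that by (auto simp: descents_def)
    have "c (S ! i) = S ! Suc i" using stepS[of i] i by simp
    hence ci: "c (tc N c i) = tc N c (Suc i)" using tcS[of i] tcS[of "Suc i"] i by simp
    have "tc N c i \<in> drops ?m c" using ci i tin[of i] by (simp add: drops_def)
    thus ?thesis using oo ci by metis
  qed
  show "tc N c \<in> Aset N" using tp t1 td by (simp add: Aset_def perms_def)
qed

lemma g_bij:
  assumes N: "N \<ge> 1" and oN: "odd N"
  shows "bij_betw (\<lambda>\<tau>. cycle_of_list (Lw N \<tau>)) (Aset N) (Ccyc (N+2))"
proof (rule bij_betw_byWitness[where f' = "tc N"])
  show "\<forall>\<tau>\<in>Aset N. tc N (cycle_of_list (Lw N \<tau>)) = \<tau>"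
  proof
    fix \<tau> assume A: "\<tau> \<in> Aset N"
    have p: "\<tau> permutes {1..N}" using A by (simp add: Aset_def perms_def)
    note ds = Lw_distinct_set[OF p]
    show "tc N (cycle_of_list (Lw N \<tau>)) = \<tau>"
    proof
      fix k show "tc N (cycle_of_list (Lw N \<tau>)) k = \<tau> k"
      proof (cases "k \<in> {1..N}")
        case True
        have "(cycle_of_list (Lw N \<tau>) ^^ k) (Lw N \<tau> ! 0) = Lw N \<tau> ! ((0 + k) mod (N+2))"
          using cyc_pow_nth[OF ds(1), of 0] by (simp add: Lw_len)
        then show ?thesis using True by (simp add: tc_def Lw_nth)
      next
        case False then have "tc N (cycle_of_list (Lw N \<tau>)) k = k" unfolding tc_def by auto
        then show ?thesis using p False by (simp add: permutes_not_in)
      qed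
    qed
  qed
  show "\<forall>c\<in>Ccyc (N+2). cycle_of_list (Lw N (tc N c)) = c" using C_props(2)[OF _ N oN] by blast
  show "(\<lambda>\<tau>. cycle_of_list (Lw N \<tau>)) ` Aset N \<subseteq> Ccyc (N+2)" using Lw_in_C[OF _ N oN] by blast
  show "tc N ` Ccyc (N+2) \<subseteq> Aset N" using C_props(3)[OF _ N oN] by blast
qed



definition rc :: "nat \<Rightarrow> (nat \<Rightarrow> nat) \<Rightarrow> nat \<Rightarrow> nat" where
  "rc N \<sigma> = (\<lambda>i. if i \<in> {1..N} then N+1 - \<sigma> (N+1-i) else i)"

lemma sin: "\<sigma> permutes {1..N} \<Longrightarrow> i \<in> {1..N} \<Longrightarrow> \<sigma> i \<in> {1..N}"
  by (rule permutes_in_image[THEN iffD2])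

lemma rc_perm:
  assumes p: "\<sigma> permutes {1..N}"
  shows "rc N \<sigma> permutes {1..N}"
proof (rule perm_of_inj)
  show "\<And>x. x \<in> {1..N} \<Longrightarrow> rc N \<sigma> x \<in> {1..N}"
  proof -
    fix x assume x: "x \<in> {1..N}"
    have "\<sigma> (N+1-x) \<in> {1..N}" by (rule sin[OF p]; use x in auto)+
    thus "rc N \<sigma> x \<in> {1..N}" using x by (auto simp: rc_def)
  qed
  show "inj_on (rc N \<sigma>) {1..N}"
  proof (rule inj_onI)
    fix x y assume x: "x \<in> {1..N}" and y: "y \<in> {1..N}" and e: "rc N \<sigma> x = rc N \<sigma> y"
    have a: "\<sigma> (N+1-x) \<in> {1..N}" "\<sigma> (N+1-y) \<in> {1..N}" by (rule sin[OF p]; use x y in auto)+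
    have "N+1 - \<sigma> (N+1-x) = N+1 - \<sigma> (N+1-y)" using e x y by (simp add: rc_def)
    hence "\<sigma> (N+1-x) = \<sigma> (N+1-y)" using a by (simp only: atLeastAtMost_iff) linarith
    hence "N+1-x = N+1-y" using permutes_inj_on[OF p] x y by (auto simp: inj_on_def)
    thus "x = y" using x y by auto
  qed
qed (auto simp: rc_def)

lemma rc_rc:
  assumes p: "\<sigma> permutes {1..N}"
  shows "rc N (rc N \<sigma>) = \<sigma>"
proof
  fix i show "rc N (rc N \<sigma>) i = \<sigma> i"
  proof (cases "i \<in> {1..N}")
    case True
    have a: "\<sigma> i \<in> {1..N}" using sin[OF p True] .
    have "N+1-i \<in> {1..N}" using True by auto
    then show ?thesis using True a by (auto simp: rc_def)
  next
    case False
    have "rc N (rc N \<sigma>) i = i" using False unfolding rc_def by (simp only: if_False)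
    then show ?thesis using p False by (simp add: permutes_not_in)
  qed
qed

lemma rc_desc:
  assumes p: "\<sigma> permutes {1..N}"
  shows "i \<in> descents N (rc N \<sigma>) \<longleftrightarrow> N - i \<in> descents N \<sigma> \<and> 1 \<le> i \<and> i < N"
proof -
  have eq: "rc N \<sigma> j = N+1 - \<sigma> (N+1-j)" if "j \<in> {1..N}" for j using that by (simp add: rc_def)
  show ?thesis
  proof (cases "1 \<le> i \<and> i < N")
    case True
    have ii: "N+1-i \<in> {1..N}" "N-i \<in> {1..N}" using True by auto
    have a: "\<sigma> (N+1-i) \<in> {1..N}" "\<sigma> (N-i) \<in> {1..N}" by (rule sin[OF p]; use ii in auto)+
    have b: "N+1-i = Suc (N-i)" "N+1-Suc i = N-i" using True by auto
    have "rc N \<sigma> i > rc N \<sigma> (Suc i) \<longleftrightarrow> \<sigma> (N-i) > \<sigma> (Suc (N-i))"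
    proof -
      have a': "\<sigma> (Suc (N-i)) \<le> N" "\<sigma> (N-i) \<le> N" using a b by auto
      have "rc N \<sigma> i = N+1 - \<sigma> (Suc (N-i))" "rc N \<sigma> (Suc i) = N+1 - \<sigma> (N-i)"
        using eq[of i] eq[of "Suc i"] True b by auto
      thus ?thesis using a' by linarith
    qed
    then show ?thesis using True by (auto simp: descents_def)
  next
    case False then show ?thesis by (auto simp: descents_def)
  qed
qed

lemma rc_des:
  assumes p: "\<sigma> permutes {1..N}"
  shows "des N (rc N \<sigma>) = des N \<sigma>"
proof -
  have "descents N (rc N \<sigma>) = (\<lambda>i. N - i) ` descents N \<sigma>"
  proof (intro set_eqI iffI)
    fix i assume "i \<in> descents N (rc N \<sigma>)"
    hence "N - i \<in> descents N \<sigma>" "i = N - (N - i)" using rc_desc[OF p] by auto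
    thus "i \<in> (\<lambda>i. N - i) ` descents N \<sigma>" by blast
  next
    fix i assume "i \<in> (\<lambda>i. N - i) ` descents N \<sigma>"
    then obtain j where j: "j \<in> descents N \<sigma>" "i = N - j" by blast
    hence "1 \<le> j" "j < N" by (auto simp: descents_def)
    thus "i \<in> descents N (rc N \<sigma>)" using rc_desc[OF p, of i] j by auto
  qed
  moreover have "inj_on (\<lambda>i. N - i) (descents N \<sigma>)"
    by (rule inj_onI) (auto simp: descents_def)
  ultimately show ?thesis by (simp add: des_def card_image)
qed

lemma par: "odd (N::nat) \<Longrightarrow> x \<le> N \<Longrightarrow> odd (N+1-x) \<longleftrightarrow> odd x"
  by presburger

lemma rc_W_A:
  assumes W: "\<sigma> \<in> Wstar n"
  shows "rc (2*n+1) \<sigma> \<in> Aset (2*n+1)"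
proof -
  let ?N = "2*n+1"
  have p: "\<sigma> permutes {1..?N}" using W by (simp add: Wstar_def perms_def)
  have d: "\<forall>i \<in> descents ?N \<sigma>. odd (\<sigma> i) \<and> odd (\<sigma> (Suc i))" "odd (\<sigma> ?N)"
    using W by (auto simp: Wstar_def)
  have oN: "odd ?N" by simp
  have a1: "odd (rc ?N \<sigma> 1)"
  proof -
    have "\<sigma> ?N \<in> {1..?N}" by (rule sin[OF p]) simp
    thus ?thesis using d(2) par[OF oN, of "\<sigma> ?N"] by (simp add: rc_def)
  qed
  have a2: "odd (rc ?N \<sigma> i) \<and> odd (rc ?N \<sigma> (Suc i))" if i: "i \<in> descents ?N (rc ?N \<sigma>)" for i
  proof -
    have j: "?N - i \<in> descents ?N \<sigma>" "1 \<le> i" "i < ?N" using rc_desc[OF p] i by auto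
    have b: "?N+1-i = Suc (?N-i)" "?N+1-Suc i = ?N-i" using j by auto
    have a: "\<sigma> (Suc (?N-i)) \<in> {1..?N}" "\<sigma> (?N-i) \<in> {1..?N}" by (rule sin[OF p]; use j in auto)+
    have "rc ?N \<sigma> i = ?N+1 - \<sigma> (Suc (?N-i))" "rc ?N \<sigma> (Suc i) = ?N+1 - \<sigma> (?N-i)"
      using j b by (auto simp: rc_def)
    thus ?thesis using d(1) j(1) a par[OF oN] by auto
  qed
  show ?thesis using rc_perm[OF p] a1 a2 by (simp add: Aset_def perms_def)
qed

lemma rc_A_W:
  assumes A: "\<tau> \<in> Aset (2*n+1)"
  shows "rc (2*n+1) \<tau> \<in> Wstar n"
proof -
  let ?N = "2*n+1"
  have p: "\<tau> permutes {1..?N}" using A by (simp add: Aset_def perms_def)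
  have d: "\<forall>i \<in> descents ?N \<tau>. odd (\<tau> i) \<and> odd (\<tau> (Suc i))" "odd (\<tau> 1)"
    using A by (auto simp: Aset_def)
  have oN: "odd ?N" by simp
  have a1: "odd (rc ?N \<tau> ?N)"
  proof -
    have "\<tau> 1 \<in> {1..?N}" by (rule sin[OF p]) simp
    thus ?thesis using d(2) par[OF oN, of "\<tau> 1"] by (simp add: rc_def)
  qed
  have a2: "odd (rc ?N \<tau> i) \<and> odd (rc ?N \<tau> (Suc i))" if i: "i \<in> descents ?N (rc ?N \<tau>)" for i
  proof -
    have j: "?N - i \<in> descents ?N \<tau>" "1 \<le> i" "i < ?N" using rc_desc[OF p] i by auto
    have b: "?N+1-i = Suc (?N-i)" "?N+1-Suc i = ?N-i" using j by auto
    have a: "\<tau> (Suc (?N-i)) \<in> {1..?N}" "\<tau> (?N-i) \<in> {1..?N}" by (rule sin[OF p]; use j in auto)+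
    have "rc ?N \<tau> i = ?N+1 - \<tau> (Suc (?N-i))" "rc ?N \<tau> (Suc i) = ?N+1 - \<tau> (?N-i)"
      using j b by (auto simp: rc_def)
    thus ?thesis using d(1) j(1) a par[OF oN] by auto
  qed
  show ?thesis using rc_perm[OF p] a1 a2 by (simp add: Wstar_def perms_def)
qed

lemma rc_bij: "bij_betw (rc (2*n+1)) (Wstar n) (Aset (2*n+1))"
proof (rule bij_betw_byWitness[where f' = "rc (2*n+1)"])
  show "\<forall>a\<in>Wstar n. rc (2*n+1) (rc (2*n+1) a) = a"
    using rc_rc by (auto simp: Wstar_def perms_def)
  show "\<forall>a\<in>Aset (2*n+1). rc (2*n+1) (rc (2*n+1) a) = a"
    using rc_rc by (auto simp: Aset_def perms_def)
qed (use rc_W_A rc_A_W in blast)+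

theorem mainTheorem10:
  fixes n :: nat
  assumes "n \<ge> 1"
  shows "\<exists>f. bij_betw f (Wstar n) (Ccyc (2*n+3)) \<and>
    (\<forall>\<sigma> \<in> Wstar n. drop_num (2*n+3) (f \<sigma>) = des (2*n+1) \<sigma> + 1)"
proof -
  let ?N = "2*n+1"
  have e: "2*n+3 = ?N + 2" by simp
  have N: "?N \<ge> 1" and oN: "odd ?N" by auto
  let ?f = "(\<lambda>\<tau>. cycle_of_list (Lw ?N \<tau>)) \<circ> rc ?N"
  have b: "bij_betw ?f (Wstar n) (Ccyc (?N+2))"
    using bij_betw_trans[OF rc_bij g_bij[OF N oN]] .
  have d: "\<forall>\<sigma> \<in> Wstar n. drop_num (?N+2) (?f \<sigma>) = des ?N \<sigma> + 1"
  proof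
    fix \<sigma> assume "\<sigma> \<in> Wstar n"
    hence p: "\<sigma> permutes {1..?N}" by (simp add: Wstar_def perms_def)
    show "drop_num (?N+2) (?f \<sigma>) = des ?N \<sigma> + 1"
      using dropnum_Lw[OF rc_perm[OF p] N] rc_des[OF p] by simp
  qed
  show ?thesis unfolding e using b d by blast
qed

end
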